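(* Let $S\subseteq N$ be a maximal $1$-switchable set. Then for all $a\in S$ and all $b\in N$, ${\rm s}(1,a,b)\in S$; that is, every element of $N$ that differs from an element of $S$ in at most the first component is also in $S$.
   Context: Fix positive integers $n, r_1,\dots,r_n$, let $N=[r_1]\times\cdots\times[r_n]$, and let $R$ be the polynomial ring over a field in the variables $x_a$, $a\in N$. For $a,b\in N$ and $i\in[n]$, ${\rm s}(i,a,b)\in N$ has $i$-th component $b_i$ and other components equal to those of $a$. Let $d(a,b)=\#\{j: a_j\neq b_j\}$ and $f_{i,a,b}=x_ax_b-x_{{\rm s}(i,a,b)}x_{{\rm s}(i,b,a)}$. A subset $S\subseteq N$ is $1$-switchable if for all $a,b\in S$ with $d(a,b)=2$, ${\rm s}(1,a,b)\in S$. Elements $a,b\in S$ are connected in $S$ if there are $a_0=a,\dots,a_k=b$ in $S$ with $d(a_{j-1},a_j)\le 1$ for all $j$. For $1$-switchable $S$: $\tilde{\mathcal{I}}^{\langle 1\rangle}_S=(f_{1,a,b}: a,b \text{ connected in } S)$, $\mathrm{Var}^{\langle 1\rangle}_S=(x_a: a\notin S)$, $P^{\langle 1\rangle}_S=\mathrm{Var}^{\langle 1\rangle}_S+\tilde{\mathcal{I}}^{\langle 1\rangle}_S$. A $1$-switchable $S$ is maximal $1$-switchable if for every $1$-switchable $T$ properly containing $S$, $P^{\langle 1\rangle}_S$ and $P^{\langle 1\rangle}_T$ are incomparable under inclusion. *)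

theory Defs
  imports "HOL-Library.Poly_Mapping"
begin

text \<open>Component i of the paper
 is list index i-1, so the "first component" is index 0.\<close>

definition gridN :: "nat list \<Rightarrow> nat list set" where
  "gridN r = {a. length a = length r \<and> (\<forall>j<length r. 1 \<le> a ! j \<and> a ! j \<le> r ! j)}"

definition sw :: "nat \<Rightarrow> nat list \<Rightarrow> nat list \<Rightarrow> nat list" where
  "sw i a b = a[i := b ! i]"

definition dist_h :: "nat list \<Rightarrow> nat list \<Rightarrow> nat" where
  "dist_h a b = card {j. j < length a \<and> a ! j \<noteq> b ! j}"

definition one_switchable :: "nat list \<Rightarrow> nat list set \<Rightarrow> bool" where
  "one_switchable r S \<longleftrightarrow> S \<subseteq> gridN r \<and>
     (\<forall>a\<in>S. \<forall>b\<in>S. dist_h a b = 2 \<longrightarrow> sw 0 a b \<in> S)"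

definition connected_in :: "nat list set \<Rightarrow> nat list \<Rightarrow> nat list \<Rightarrow> bool" where
  "connected_in S a b \<longleftrightarrow> a \<in> S \<and> b \<in> S \<and>
     (\<lambda>x y. x \<in> S \<and> y \<in> S \<and> dist_h x y \<le> 1)\<^sup>*\<^sup>* a b"

text \<open>The polynomial ring R = k[x_a : a \<in> N], as polynomials (finitely supported maps from
 monomials to coefficients) all of whose monomials only involve variables from N.\<close>
type_synonym 'k mpoly = "(nat list \<Rightarrow>\<^sub>0 nat) \<Rightarrow>\<^sub>0 'k"

definition polyRing :: "nat list \<Rightarrow> ('k::field) mpoly set" where
  "polyRing r = {p. \<forall>m \<in> Poly_Mapping.keys p. Poly_Mapping.keys m \<subseteq> gridN r}"

definition var :: "nat list \<Rightarrow> ('k::field) mpoly" where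
  "var a = Poly_Mapping.single (Poly_Mapping.single a 1) 1"

definition ideal_gen :: "nat list \<Rightarrow> ('k::field) mpoly set \<Rightarrow> 'k mpoly set" where
  "ideal_gen r G = {(\<Sum>g\<in>F. c g * g) | F c. finite F \<and> F \<subseteq> G \<and> (\<forall>g\<in>F. c g \<in> polyRing r)}"

definition f_bin :: "nat \<Rightarrow> nat list \<Rightarrow> nat list \<Rightarrow> ('k::field) mpoly" where
  "f_bin i a b = var a * var b - var (sw i a b) * var (sw i b a)"

definition P_ideal :: "'k itself \<Rightarrow> nat list \<Rightarrow> nat list set \<Rightarrow> ('k::field) mpoly set" where
  "P_ideal _ r S = ideal_gen r ({var a | a. a \<in> gridN r \<and> a \<notin> S}
                               \<union> {f_bin 0 a b | a b. connected_in S a b})"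

definition maximal_one_switchable :: "('k::field) itself \<Rightarrow> nat list \<Rightarrow> nat list set \<Rightarrow> bool" where
  "maximal_one_switchable K r S \<longleftrightarrow> one_switchable r S \<and>
     (\<forall>T. one_switchable r T \<and> S \<subset> T \<longrightarrow>
        \<not> (P_ideal K r S \<subseteq> P_ideal K r T) \<and> \<not> (P_ideal K r T \<subseteq> P_ideal K r S))"

end

theory Submission
  imports Defs
begin
lemma polyRing_add:
  assumes p: "p \<in> polyRing r" and q: "q \<in> polyRing r"
  shows "p + q \<in> polyRing r"
  unfolding polyRing_def mem_Collect_eq
proof (intro ballI)
  fix m assume "m \<in> Poly_Mapping.keys (p + q)"
  then have "m \<in> Poly_Mapping.keys p \<or> m \<in> Poly_Mapping.keys q" using keys_add[of p q] by blast
  then show "Poly_Mapping.keys m \<subseteq> gridN r" using p q unfolding polyRing_def by blast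
qed

lemma polyRing_mult:
  assumes p: "p \<in> polyRing r" and q: "q \<in> polyRing r"
  shows "p * q \<in> polyRing r"
  unfolding polyRing_def mem_Collect_eq
proof (intro ballI)
  fix m assume m: "m \<in> Poly_Mapping.keys (p * q)"
  then obtain a b where "m = a + b" "a \<in> Poly_Mapping.keys p" "b \<in> Poly_Mapping.keys q"
    using keys_mult by blast
  then show "Poly_Mapping.keys m \<subseteq> gridN r" using p q keys_add[of a b] unfolding polyRing_def by blast
qed

lemma polyRing_uminus: "p \<in> polyRing r \<Longrightarrow> - p \<in> polyRing r"
  unfolding polyRing_def by simp

lemma polyRing_zero: "0 \<in> polyRing r" unfolding polyRing_def by simp
lemma polyRing_one: "1 \<in> polyRing r" unfolding polyRing_def by simp

lemma polyRing_var: "a \<in> gridN r \<Longrightarrow> (var a :: 'k::field mpoly) \<in> polyRing r"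
  unfolding polyRing_def var_def by simp

lemma ideal_gen_zero: "0 \<in> ideal_gen r G"
  unfolding ideal_gen_def by (rule CollectI, rule exI[of _ "{}"]) auto

lemma ideal_gen_gen: "g \<in> G \<Longrightarrow> (g::'k::field mpoly) \<in> ideal_gen r G"
  unfolding ideal_gen_def
  by (rule CollectI, rule exI[of _ "{g}"], rule exI[of _ "\<lambda>_. 1"]) (auto simp: polyRing_one)

lemma ideal_gen_add:
  assumes "x \<in> ideal_gen r G" "y \<in> ideal_gen r G"
  shows "(x::'k::field mpoly) + y \<in> ideal_gen r G"
proof -
  obtain F c where x: "x = (\<Sum>g\<in>F. c g * g)" "finite F" "F \<subseteq> G" "\<forall>g\<in>F. c g \<in> polyRing r"
    using assms(1) unfolding ideal_gen_def by blast
  obtain F' c' where y: "y = (\<Sum>g\<in>F'. c' g * g)" "finite F'" "F' \<subseteq> G" "\<forall>g\<in>F'. c' g \<in> polyRing r"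
    using assms(2) unfolding ideal_gen_def by blast
  define d where "d g = (if g \<in> F then c g else 0) + (if g \<in> F' then c' g else 0)" for g
  have 1: "(\<Sum>g\<in>F \<union> F'. (if g \<in> F then c g else 0) * g) = x"
    unfolding x(1) by (rule sum.mono_neutral_cong_right) (use x y in auto)
  have 2: "(\<Sum>g\<in>F \<union> F'. (if g \<in> F' then c' g else 0) * g) = y"
    unfolding y(1) by (rule sum.mono_neutral_cong_right) (use x y in auto)
  have "x + y = (\<Sum>g\<in>F \<union> F'. d g * g)"
    unfolding 1[symmetric] 2[symmetric] sum.distrib[symmetric] d_def by (simp add: distrib_right)
  moreover have "\<forall>g\<in>F \<union> F'. d g \<in> polyRing r"
    using x(4) y(4) by (auto simp: d_def polyRing_add polyRing_zero)
  ultimately show ?thesis unfolding ideal_gen_def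
    by (intro CollectI exI[of _ "F \<union> F'"] exI[of _ d]) (use x y in auto)
qed

lemma ideal_gen_mult:
  assumes "x \<in> ideal_gen r G" "p \<in> polyRing r"
  shows "p * (x::'k::field mpoly) \<in> ideal_gen r G"
proof -
  obtain F c where x: "x = (\<Sum>g\<in>F. c g * g)" "finite F" "F \<subseteq> G" "\<forall>g\<in>F. c g \<in> polyRing r"
    using assms(1) unfolding ideal_gen_def by blast
  have "p * x = (\<Sum>g\<in>F. (p * c g) * g)" unfolding x(1) by (simp add: sum_distrib_left mult.assoc)
  moreover have "\<forall>g\<in>F. p * c g \<in> polyRing r" using x(4) assms(2) polyRing_mult by blast
  ultimately show ?thesis unfolding ideal_gen_def
    by (intro CollectI exI[of _ F] exI[of _ "\<lambda>g. p * c g"]) (use x in auto)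
qed

lemma ideal_gen_uminus:
  assumes "x \<in> ideal_gen r G"
  shows "- (x::'k::field mpoly) \<in> ideal_gen r G"
  using ideal_gen_mult[OF assms polyRing_uminus[OF polyRing_one]] by simp

lemma ideal_gen_diff:
  "x \<in> ideal_gen r G \<Longrightarrow> y \<in> ideal_gen r G \<Longrightarrow> (x::'k::field mpoly) - y \<in> ideal_gen r G"
  using ideal_gen_add[of x r G "-y"] ideal_gen_uminus by auto

lemma ideal_gen_mono:
  assumes "G \<subseteq> ideal_gen r H"
  shows "ideal_gen r (G::'k::field mpoly set) \<subseteq> ideal_gen r H"
proof
  fix x assume "x \<in> ideal_gen r G"
  then obtain F c where x: "x = (\<Sum>g\<in>F. c g * g)" "finite F" "F \<subseteq> G" "\<forall>g\<in>F. c g \<in> polyRing r"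
    unfolding ideal_gen_def by blast
  have "F \<subseteq> G \<longrightarrow> (\<forall>g\<in>F. c g \<in> polyRing r) \<longrightarrow> (\<Sum>g\<in>F. c g * g) \<in> ideal_gen r H"
    using x(2)
  proof (induction F rule: finite_induct)
    case empty then show ?case by (simp add: ideal_gen_zero)
  next
    case (insert g F)
    then show ?case using assms by (auto intro!: ideal_gen_add ideal_gen_mult)
  qed
  then show "x \<in> ideal_gen r H" using x by blast
qed


definition agree0 :: "nat list \<Rightarrow> nat list \<Rightarrow> bool" where
  "agree0 x y \<longleftrightarrow> length x = length y \<and> (\<forall>i<length x. i \<noteq> 0 \<longrightarrow> x ! i = y ! i)"

lemma dist_le: "{j. j < length x \<and> x ! j \<noteq> y ! j} \<subseteq> D \<Longrightarrow> finite D \<Longrightarrow> dist_h x y \<le> card D"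
  unfolding dist_h_def by (rule card_mono)

lemma dist_le1_obtain:
  assumes "dist_h x y \<le> 1"
  obtains j where "{i. i < length x \<and> x ! i \<noteq> y ! i} \<subseteq> {j}"
proof -
  let ?A = "{i. i < length x \<and> x ! i \<noteq> y ! i}"
  have f: "finite ?A" by simp
  have "\<forall>a\<in>?A. \<forall>b\<in>?A. a = b" using assms card_le_Suc0_iff_eq[OF f] unfolding dist_h_def by simp
  then show ?thesis using that by (cases "?A = {}") blast+
qed

lemma grid_len: "x \<in> gridN r \<Longrightarrow> length x = length r"
  unfolding gridN_def by simp

lemma sw_grid: "x \<in> gridN r \<Longrightarrow> y \<in> gridN r \<Longrightarrow> r \<noteq> [] \<Longrightarrow> sw 0 x y \<in> gridN r"
  unfolding gridN_def sw_def by (auto simp: nth_list_update)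

lemma conn_trans: "connected_in S a b \<Longrightarrow> connected_in S b c \<Longrightarrow> connected_in S a c"
  unfolding connected_in_def by (meson rtranclp_trans)

lemma conn_step1: "a \<in> S \<Longrightarrow> b \<in> S \<Longrightarrow> dist_h a b \<le> 1 \<Longrightarrow> connected_in S a b"
  unfolding connected_in_def by (auto intro: r_into_rtranclp)

lemma conn_step:
  assumes sw: "one_switchable r S" and s: "s \<in> S" and t: "t \<in> S"
    and sy: "agree0 s y" and tz: "agree0 t z" and d: "dist_h y z \<le> 1"
    and ne: "r \<noteq> []"
  shows "connected_in S s t"
proof -
  have SN: "S \<subseteq> gridN r" using sw unfolding one_switchable_def by blast
  have ls: "length s = length r" and lt: "length t = length r" using SN s t grid_len by blast+
  have ly: "length y = length r" and lz: "length z = length r" using sy tz ls lt unfolding agree0_def by auto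
  obtain j where j: "{i. i < length y \<and> y ! i \<noteq> z ! i} \<subseteq> {j}" using dist_le1_obtain[OF d] by blast
  have st: "{i. i < length s \<and> s ! i \<noteq> t ! i} \<subseteq> {0, j}"
  proof
    fix i assume "i \<in> {i. i < length s \<and> s ! i \<noteq> t ! i}"
    then have i: "i < length s" "s ! i \<noteq> t ! i" by auto
    show "i \<in> {0, j}"
    proof (rule ccontr)
      assume "i \<notin> {0, j}"
      then have "s ! i = y ! i" "t ! i = z ! i" "y ! i = z ! i"
        using i sy tz j ls lt ly lz unfolding agree0_def by auto
      then show False using i by simp
    qed
  qed
  have c2: "card {0::nat, j} \<le> 2" by (cases "j = 0") auto
  have d2: "dist_h s t \<le> 2" using dist_le[OF st] c2 by simp
  show ?thesis
  proof (cases "dist_h s t \<le> 1")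
    case True then show ?thesis using conn_step1 s t by blast
  next
    case False
    then have "dist_h s t = 2" using d2 by simp
    then have w: "sw 0 s t \<in> S" using sw s t unfolding one_switchable_def by blast
    have "{i. i < length s \<and> s ! i \<noteq> sw 0 s t ! i} \<subseteq> {0}"
    proof (rule subsetI, rule ccontr)
      fix i assume "i \<in> {i. i < length s \<and> s ! i \<noteq> sw 0 s t ! i}" "i \<notin> {0}"
      then show False by (simp add: sw_def nth_list_update_neq)
    qed
    then have d1: "dist_h s (sw 0 s t) \<le> 1" using dist_le[of s "sw 0 s t" "{0}"] by simp
    have "{i. i < length (sw 0 s t) \<and> sw 0 s t ! i \<noteq> t ! i} \<subseteq> {j}"
      using st ls lt ne unfolding sw_def by (auto simp: nth_list_update)
    then have d2: "dist_h (sw 0 s t) t \<le> 1" using dist_le[of "sw 0 s t" t "{j}"] by simp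
    show ?thesis using conn_trans conn_step1[OF s w d1] conn_step1[OF w t d2] by blast
  qed
qed

lemma path_lemma:
  assumes sw: "one_switchable r S" and ne: "r \<noteq> []"
    and path: "(\<lambda>x y. x \<in> T \<and> y \<in> T \<and> dist_h x y \<le> 1)\<^sup>*\<^sup>* u y"
    and u: "u \<in> S"
    and Tdef: "\<forall>x\<in>T. \<exists>s\<in>S. agree0 s x"
  shows "\<forall>s\<in>S. agree0 s y \<longrightarrow> connected_in S u s"
  using path
proof (induction rule: rtranclp_induct)
  case base
  have "agree0 u u" unfolding agree0_def by simp
  moreover have "dist_h u u \<le> 1" unfolding dist_h_def by simp
  ultimately show ?case using conn_step[OF sw u _ _ _ _ ne] u by blast
next
  case (step y z)
  show ?case
  proof (intro ballI impI)
    fix s assume s: "s \<in> S" "agree0 s z"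
    obtain s' where s': "s' \<in> S" "agree0 s' y" using step Tdef by blast
    have "connected_in S u s'" using step.IH s' by blast
    moreover have "connected_in S s' s" using conn_step[OF sw s'(1) s(1) s'(2) s(2) _ ne] step by blast
    ultimately show "connected_in S u s" using conn_trans by blast
  qed
qed

lemma sw_sw: "length b > 0 \<Longrightarrow> sw 0 (sw 0 a b) (sw 0 b a) = a"
  unfolding sw_def by (cases a) auto

lemma P_gen: "g \<in> {var a | a. a \<in> gridN r \<and> a \<notin> S} \<union> {f_bin 0 a b | a b. connected_in S a b}
  \<Longrightarrow> g \<in> P_ideal K r S"
  unfolding P_ideal_def by (rule ideal_gen_gen)

lemma P_var: "a \<in> gridN r \<Longrightarrow> a \<notin> S \<Longrightarrow> (var a :: 'k::field mpoly) \<in> P_ideal TYPE('k) r S"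
  by (rule P_gen) blast

lemma P_f: "connected_in S a b \<Longrightarrow> (f_bin 0 a b :: 'k::field mpoly) \<in> P_ideal TYPE('k) r S"
  by (rule P_gen) blast

lemma P_add: "x \<in> P_ideal K r S \<Longrightarrow> y \<in> P_ideal K r S \<Longrightarrow> x + y \<in> P_ideal K r S"
  unfolding P_ideal_def by (rule ideal_gen_add)

lemma P_diff: "x \<in> P_ideal K r S \<Longrightarrow> y \<in> P_ideal K r S \<Longrightarrow> x - y \<in> P_ideal K r S"
  unfolding P_ideal_def by (rule ideal_gen_diff)

lemma P_mult: "x \<in> P_ideal K r S \<Longrightarrow> p \<in> polyRing r \<Longrightarrow> p * x \<in> P_ideal K r S"
  unfolding P_ideal_def by (rule ideal_gen_mult)

lemma P_prod:
  assumes "x \<in> gridN r" "y \<in> gridN r" "x \<notin> S \<or> y \<notin> S"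
  shows "(var x * var y :: 'k::field mpoly) \<in> P_ideal TYPE('k) r S"
proof (cases "x \<notin> S")
  case True
  have "var y * (var x :: 'k mpoly) \<in> P_ideal TYPE('k) r S"
    by (rule P_mult[OF P_var[OF assms(1) True] polyRing_var[OF assms(2)]])
  then show ?thesis by (simp add: mult.commute)
next
  case False
  then have yS: "y \<notin> S" using assms(3) by blast
  show ?thesis by (rule P_mult[OF P_var[OF assms(2) yS] polyRing_var[OF assms(1)]])
qed

theorem lemma4p16:
  fixes r :: "nat list" and S :: "nat list set"
  assumes "r \<noteq> []" and "\<forall>x\<in>set r. 0 < x"
    and "maximal_one_switchable TYPE('k::field) r S"
  shows "\<forall>a\<in>S. \<forall>b\<in>gridN r. sw 0 a b \<in> S"
proof (rule ccontr)
  assume "\<not> ?thesis"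
  then obtain a0 b0 where a0: "a0 \<in> S" and b0: "b0 \<in> gridN r" and nS: "sw 0 a0 b0 \<notin> S" by blast
  have swS: "one_switchable r S" using assms(3) unfolding maximal_one_switchable_def by blast
  have SN: "S \<subseteq> gridN r" using swS unfolding one_switchable_def by blast
  have ne: "r \<noteq> []" by fact
  define T where "T = {x \<in> gridN r. \<exists>s\<in>S. agree0 s x}"
  have ag_refl: "agree0 x x" for x unfolding agree0_def by simp
  have ag_sw: "agree0 s x \<Longrightarrow> agree0 s (sw 0 x y)" for s x y
    unfolding agree0_def sw_def by (auto simp: nth_list_update)
  have STsub: "S \<subseteq> T" using SN ag_refl unfolding T_def by blast
  have TN: "T \<subseteq> gridN r" unfolding T_def by blast
  have Tdef: "\<forall>x\<in>T. \<exists>s\<in>S. agree0 s x" unfolding T_def by blast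
  have c: "sw 0 a0 b0 \<in> T" unfolding T_def using sw_grid[OF _ b0 ne] a0 SN ag_sw[OF ag_refl] by blast
  have STp: "S \<subset> T" using STsub c nS by blast
  have swT: "one_switchable r T"
    unfolding one_switchable_def
  proof (intro conjI TN ballI impI)
    fix x y assume x: "x \<in> T" and y: "y \<in> T"
    then show "sw 0 x y \<in> T" using sw_grid[OF _ _ ne] TN ag_sw unfolding T_def by blast
  qed
  have ne_len: "x \<in> gridN r \<Longrightarrow> length x > 0" for x using grid_len ne by fastforce
  have connTS: "connected_in S a b" if "connected_in T a b" "a \<in> S" "b \<in> S" for a b
    using path_lemma[OF swS ne _ that(2) Tdef] that ag_refl unfolding connected_in_def by blast
  have agd: "agree0 x y \<Longrightarrow> dist_h x y \<le> 1" for x y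
    using dist_le[of x y "{0}"] unfolding agree0_def by fastforce
  have ag_sym: "agree0 x y \<Longrightarrow> agree0 y x" for x y unfolding agree0_def by auto
  let ?P = "\<lambda>U. P_ideal TYPE('k) r U"
  let ?G = "{var a :: 'k mpoly | a. a \<in> gridN r \<and> a \<notin> T} \<union> {f_bin 0 a b :: 'k mpoly | a b. connected_in T a b}"
  have varS: "(var x :: 'k mpoly) \<in> ?P S" if "x \<in> gridN r" "x \<notin> S" for x
    using P_var that by blast
  have prodS: "(var x * var y :: 'k mpoly) \<in> ?P S" if "x \<in> gridN r" "y \<in> gridN r" "x \<notin> S \<or> y \<notin> S" for x y
    using P_prod that by blast
  have fS: "(f_bin 0 x y :: 'k mpoly) \<in> ?P S" if "connected_in S x y" for x y
    using P_f that by blast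
  have "?G \<subseteq> ?P S"
  proof
    fix g :: "'k mpoly" assume "g \<in> ?G"
    then consider (v) a where "g = var a" "a \<in> gridN r" "a \<notin> T"
      | (f) a b where "g = f_bin 0 a b" "connected_in T a b" by blast
    then show "g \<in> ?P S"
    proof cases
      case v then show ?thesis using varS STsub by blast
    next
      case f
      have aT: "a \<in> T" and bT: "b \<in> T" using f unfolding connected_in_def by auto
      have aN: "a \<in> gridN r" and bN: "b \<in> gridN r" using aT bT TN by auto
      define a' where "a' = sw 0 a b"
      define b' where "b' = sw 0 b a"
      have a'N: "a' \<in> gridN r" and b'N: "b' \<in> gridN r" using sw_grid[OF _ _ ne] aN bN a'_def b'_def by auto
      obtain sa where sa: "sa \<in> S" "agree0 sa a" using aT Tdef by blast
      obtain sb where sb: "sb \<in> S" "agree0 sb b" using bT Tdef by blast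
      have a'T: "a' \<in> T" unfolding T_def using a'N sa ag_sw a'_def by blast
      have b'T: "b' \<in> T" unfolding T_def using b'N sb ag_sw b'_def by blast
      have "agree0 a a'" using ag_sw[OF ag_refl] a'_def by blast
      then have "connected_in T a' a" using conn_step1[OF a'T aT] agd ag_sym by blast
      moreover have "agree0 b b'" using ag_sw[OF ag_refl] b'_def by blast
      then have "connected_in T b b'" using conn_step1[OF bT b'T] agd by blast
      ultimately have cT': "connected_in T a' b'" using f(2) conn_trans by blast
      have fdef: "f_bin 0 a b = (var a * var b - var a' * var b' :: 'k mpoly)"
        unfolding f_bin_def a'_def b'_def ..
      show ?thesis
      proof (cases "a \<in> S \<and> b \<in> S")
        case True then show ?thesis using fS connTS f by blast
      next
        case False
        have ab: "(var a * var b :: 'k mpoly) \<in> ?P S" using prodS aN bN False by blast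
        have a'b': "(var a' * var b' :: 'k mpoly) \<in> ?P S"
        proof (cases "a' \<in> S \<and> b' \<in> S")
          case True
          then have "connected_in S a' b'" using connTS cT' by blast
          then have fin: "(f_bin 0 a' b' :: 'k mpoly) \<in> ?P S" using fS by blast
          have "sw 0 a' b' = a" "sw 0 b' a' = b" using sw_sw ne_len aN bN a'_def b'_def by auto
          then have "(f_bin 0 a' b' :: 'k mpoly) = var a' * var b' - var a * var b"
            unfolding f_bin_def by simp
          then have "(var a' * var b' :: 'k mpoly) = f_bin 0 a' b' + var a * var b" by simp
          then show ?thesis using P_add[OF fin ab] by simp
        next
          case False then show ?thesis using prodS a'N b'N by blast
        qed
        show ?thesis unfolding f(1) fdef by (rule P_diff[OF ab a'b'])
      qed
    qed
  qed
  then have "ideal_gen r ?G \<subseteq> ?P S" unfolding P_ideal_def[of "TYPE('k)" r S] by (rule ideal_gen_mono)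
  then have "?P T \<subseteq> ?P S" unfolding P_ideal_def[of "TYPE('k)" r T] .
  moreover have M: "one_switchable r T \<and> S \<subset> T \<longrightarrow> \<not> (?P S \<subseteq> ?P T) \<and> \<not> (?P T \<subseteq> ?P S)"
    using assms(3) unfolding maximal_one_switchable_def by (rule conjunct2[THEN spec])
  have "\<not> (?P T \<subseteq> ?P S)" using mp[OF M conjI[OF swT STp]] by (rule conjunct2)
  ultimately show False by contradiction
qed

end
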